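(* Let $A_n$ be the nilCoxeter algebra, let $\psi_n$ be the algebra involution of $A_n$ with $\psi_n(Y_i)=Y_{n-i}$, and let $A_n^{\psi}$ be the $A_n$-bimodule which is $A_n$ with left action by left multiplication and right action twisted by $\psi_n$ (i.e. $a\cdot t\cdot b=at\psi_n(b)$). Let $A_n^{\ast}=\mathrm{Hom}_{\mathbb{Q}}(A_n,\mathbb{Q})$ with the $A_n$-bimodule structure $(a f b)(y)=f(bya)$. Then $A_n^{\ast}$ and $A_n^{\psi}$ are isomorphic as $A_n$-bimodules.
   Context: $A_n$ is the unital $\mathbb{Q}$-algebra generated by $Y_1,\dots,Y_{n-1}$ with relations $Y_i^2=0$, $Y_iY_j=Y_jY_i$ for $|i-j|>1$, $Y_iY_{i+1}Y_i=Y_{i+1}Y_iY_{i+1}$. *)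

theory Defs
  imports Complex_Main
begin

text \<open>The free associative Q-algebra on Y_1..Y_(n-1): finitely supported
coefficient functions on words (lists of generator indices in {1..<n}).\<close>

definition FreeAlg :: "nat \<Rightarrow> (nat list \<Rightarrow> rat) set" where
  "FreeAlg n = {f. finite {w. f w \<noteq> 0} \<and> (\<forall>w. f w \<noteq> 0 \<longrightarrow> set w \<subseteq> {1..<n})}"

definition fmul :: "(nat list \<Rightarrow> rat) \<Rightarrow> (nat list \<Rightarrow> rat) \<Rightarrow> (nat list \<Rightarrow> rat)" (infixl "\<star>" 70) where
  "f \<star> g = (\<lambda>w. \<Sum>k\<le>length w. f (take k w) * g (drop k w))"

definition fadd :: "(nat list \<Rightarrow> rat) \<Rightarrow> (nat list \<Rightarrow> rat) \<Rightarrow> (nat list \<Rightarrow> rat)" where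
  "fadd f g = (\<lambda>w. f w + g w)"

definition fsub :: "(nat list \<Rightarrow> rat) \<Rightarrow> (nat list \<Rightarrow> rat) \<Rightarrow> (nat list \<Rightarrow> rat)" where
  "fsub f g = (\<lambda>w. f w - g w)"

definition fsmult :: "rat \<Rightarrow> (nat list \<Rightarrow> rat) \<Rightarrow> (nat list \<Rightarrow> rat)" where
  "fsmult c f = (\<lambda>w. c * f w)"

definition Ygen :: "nat \<Rightarrow> (nat list \<Rightarrow> rat)" where
  "Ygen i = (\<lambda>w. if w = [i] then 1 else 0)"

definition NilCoxRels :: "nat \<Rightarrow> (nat list \<Rightarrow> rat) set" where
  "NilCoxRels n =
     {Ygen i \<star> Ygen i | i. 1 \<le> i \<and> i < n}
   \<union> {fsub (Ygen i \<star> Ygen j) (Ygen j \<star> Ygen i) | i j.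
        1 \<le> i \<and> i < n \<and> 1 \<le> j \<and> j < n \<and> (i + 1 < j \<or> j + 1 < i)}
   \<union> {fsub (Ygen i \<star> Ygen (i+1) \<star> Ygen i) (Ygen (i+1) \<star> Ygen i \<star> Ygen (i+1)) | i.
        1 \<le> i \<and> i + 1 < n}"

inductive_set NilCoxIdeal :: "nat \<Rightarrow> (nat list \<Rightarrow> rat) set" for n where
  zero: "(\<lambda>_. 0) \<in> NilCoxIdeal n"
| gen: "r \<in> NilCoxRels n \<Longrightarrow> a \<in> FreeAlg n \<Longrightarrow> b \<in> FreeAlg n \<Longrightarrow> a \<star> r \<star> b \<in> NilCoxIdeal n"
| add: "x \<in> NilCoxIdeal n \<Longrightarrow> y \<in> NilCoxIdeal n \<Longrightarrow> fadd x y \<in> NilCoxIdeal n"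
| smult: "x \<in> NilCoxIdeal n \<Longrightarrow> fsmult c x \<in> NilCoxIdeal n"

text \<open>A_n = FreeAlg n / NilCoxIdeal n. Its elements are represented by elements of FreeAlg n.\<close>

definition psiF :: "nat \<Rightarrow> (nat list \<Rightarrow> rat) \<Rightarrow> (nat list \<Rightarrow> rat)" where
  "psiF n f = (\<lambda>w. f (map (\<lambda>i. n - i) w))"

text \<open>A_n^* = Hom_Q(A_n, Q): Q-linear functionals on the free algebra vanishing on the ideal.\<close>
definition NilCoxDual :: "nat \<Rightarrow> ((nat list \<Rightarrow> rat) \<Rightarrow> rat) set" where
  "NilCoxDual n = {\<phi>.
     (\<forall>x\<in>FreeAlg n. \<forall>y\<in>FreeAlg n. \<phi> (fadd x y) = \<phi> x + \<phi> y)
   \<and> (\<forall>c. \<forall>x\<in>FreeAlg n. \<phi> (fsmult c x) = c * \<phi> x)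
   \<and> (\<forall>x\<in>NilCoxIdeal n. \<phi> x = 0)}"

end

theory Submission
  imports Defs
begin


definition mon :: "nat list \<Rightarrow> nat list \<Rightarrow> rat" where
  "mon u = (\<lambda>w. if w = u then 1 else 0)"

lemma fmul_apply: "(f \<star> g) w = (\<Sum>k\<le>length w. f (take k w) * g (drop k w))"
  by (simp add: fmul_def)

lemma fmul_assoc: "(f \<star> g) \<star> h = f \<star> (g \<star> h)"
proof (rule ext)
  fix w :: "nat list"
  let ?L = "length w"
  define F where "F j m = f (take j w) * g (take m (drop j w)) * h (drop m (drop j w))" for j m
  have "((f \<star> g) \<star> h) w = (\<Sum>k\<le>?L. \<Sum>j\<le>k. F j (k - j))"
  proof -
    have "((f \<star> g) \<star> h) w = (\<Sum>k\<le>?L. \<Sum>j\<le>k. f (take j (take k w)) * g (drop j (take k w)) * h (drop k w))"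
      by (simp add: fmul_def sum_distrib_right)
    also have "\<dots> = (\<Sum>k\<le>?L. \<Sum>j\<le>k. F j (k - j))"
      by (intro sum.cong refl) (auto simp: F_def min_def drop_take)
    finally show ?thesis .
  qed
  also have "\<dots> = (\<Sum>(j,m)\<in>{(i,j). i+j \<le> ?L}. F j m)"
    by (rule sum.triangle_reindex_eq[symmetric])
  also have "\<dots> = (\<Sum>(j,m)\<in>Sigma {..?L} (\<lambda>j. {..?L - j}). F j m)"
    by (intro sum.cong) auto
  also have "\<dots> = (\<Sum>j\<le>?L. \<Sum>m\<le>?L - j. F j m)"
    by (simp add: sum.Sigma)
  also have "\<dots> = (f \<star> (g \<star> h)) w"
    by (simp add: fmul_def F_def sum_distrib_left mult.assoc)
  finally show "((f \<star> g) \<star> h) w = (f \<star> (g \<star> h)) w" .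
qed

lemma fmul_sum_right: "f \<star> (\<lambda>w. \<Sum>i\<in>A. c i * g i w) = (\<lambda>w. \<Sum>i\<in>A. c i * (f \<star> g i) w)"
  by (rule ext) (simp add: fmul_def sum_distrib_left sum.swap[of _ A] mult.left_commute)

lemma fmul_sum_left: "(\<lambda>w. \<Sum>i\<in>A. c i * g i w) \<star> f = (\<lambda>w. \<Sum>i\<in>A. c i * (g i \<star> f) w)"
  by (rule ext) (simp add: fmul_def sum_distrib_left sum_distrib_right sum.swap[of _ A] mult.assoc)

lemma fmul_fadd_right: "f \<star> fadd g h = fadd (f \<star> g) (f \<star> h)"
  by (rule ext) (simp add: fmul_def fadd_def distrib_left sum.distrib)
lemma fmul_fadd_left: "fadd g h \<star> f = fadd (g \<star> f) (h \<star> f)"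
  by (rule ext) (simp add: fmul_def fadd_def distrib_right sum.distrib)
lemma fmul_fsub_right: "f \<star> fsub g h = fsub (f \<star> g) (f \<star> h)"
  by (rule ext) (simp add: fmul_def fsub_def right_diff_distrib sum_subtractf)
lemma fmul_fsub_left: "fsub g h \<star> f = fsub (g \<star> f) (h \<star> f)"
  by (rule ext) (simp add: fmul_def fsub_def left_diff_distrib sum_subtractf)
lemma fmul_fsmult_right: "f \<star> fsmult c g = fsmult c (f \<star> g)"
  by (rule ext) (simp add: fmul_def fsmult_def sum_distrib_left mult.left_commute)
lemma fmul_fsmult_left: "fsmult c g \<star> f = fsmult c (g \<star> f)"
  by (rule ext) (simp add: fmul_def fsmult_def sum_distrib_left mult.assoc)
lemma fmul_zero_right: "f \<star> (\<lambda>_. 0) = (\<lambda>_. 0)"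
  by (rule ext) (simp add: fmul_def)
lemma fmul_zero_left: "(\<lambda>_. 0) \<star> f = (\<lambda>_. 0)"
  by (rule ext) (simp add: fmul_def)

lemma mon_mul_left: "(mon u \<star> g) w = (if take (length u) w = u then g (drop (length u) w) else 0)"
proof -
  have "(mon u \<star> g) w = (\<Sum>k\<le>length w. if k = length u then (if take (length u) w = u then g (drop (length u) w) else 0) else 0)"
    unfolding fmul_def mon_def
    by (intro sum.cong refl) auto
  also have "\<dots> = (if take (length u) w = u then g (drop (length u) w) else 0)"
    by (auto simp: sum.delta dest: arg_cong[of _ _ length])
  finally show ?thesis .
qed

lemma mon_mul_mon: "mon u \<star> mon v = mon (u @ v)"
proof (rule ext)
  fix w show "(mon u \<star> mon v) w = mon (u @ v) w"
    by (simp only: mon_mul_left) (auto simp: mon_def append_eq_conv_conj, metis append_take_drop_id)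
qed

lemma mon_Nil_mul: "mon [] \<star> f = f"
  by (rule ext) (simp add: mon_mul_left)

lemma mul_mon_Nil: "f \<star> mon [] = f"
proof (rule ext)
  fix w
  have "(f \<star> mon []) w = (\<Sum>k\<le>length w. if k = length w then f w else 0)"
    unfolding fmul_def mon_def by (intro sum.cong refl) auto
  then show "(f \<star> mon []) w = f w" by simp
qed

lemma Ygen_mon: "Ygen i = mon [i]"
  by (simp add: Ygen_def mon_def)



abbreviation supp :: "(nat list \<Rightarrow> rat) \<Rightarrow> nat list set" where
  "supp f \<equiv> {w. f w \<noteq> 0}"

lemma FreeAlgD: "f \<in> FreeAlg n \<Longrightarrow> finite (supp f)"
  "f \<in> FreeAlg n \<Longrightarrow> f w \<noteq> 0 \<Longrightarrow> set w \<subseteq> {1..<n}"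
  by (auto simp: FreeAlg_def)

lemma mon_FreeAlg: "set u \<subseteq> {1..<n} \<Longrightarrow> mon u \<in> FreeAlg n"
  by (auto simp: FreeAlg_def mon_def)

lemma FreeAlg_lincomb:
  assumes "finite A" "\<And>i. i \<in> A \<Longrightarrow> g i \<in> FreeAlg n"
  shows "(\<lambda>w. \<Sum>i\<in>A. c i * g i w) \<in> FreeAlg n"
proof -
  have sub: "supp (\<lambda>w. \<Sum>i\<in>A. c i * g i w) \<subseteq> (\<Union>i\<in>A. supp (g i))"
  proof
    fix w assume "w \<in> supp (\<lambda>w. \<Sum>i\<in>A. c i * g i w)"
    then have "(\<Sum>i\<in>A. c i * g i w) \<noteq> 0" by simp
    then obtain i where "i \<in> A" "c i * g i w \<noteq> 0" by (meson sum.neutral)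
    then show "w \<in> (\<Union>i\<in>A. supp (g i))" by auto
  qed
  have "finite (\<Union>i\<in>A. supp (g i))" using assms by (auto dest: FreeAlgD)
  then have "finite (supp (\<lambda>w. \<Sum>i\<in>A. c i * g i w))" using sub finite_subset by blast
  moreover have "set w \<subseteq> {1..<n}" if h: "(\<Sum>i\<in>A. c i * g i w) \<noteq> 0" for w
  proof -
    obtain i where "i \<in> A" "g i w \<noteq> 0" using sub h by blast
    then show ?thesis using FreeAlgD(2)[OF assms(2)] by blast
  qed
  ultimately show ?thesis by (simp add: FreeAlg_def)
qed

lemma expand: "f \<in> FreeAlg n \<Longrightarrow> f = (\<lambda>w. \<Sum>u\<in>supp f. f u * mon u w)"
proof (rule ext)
  fix w assume "f \<in> FreeAlg n"
  have "(\<Sum>u\<in>supp f. f u * mon u w) = (\<Sum>u\<in>supp f. if u = w then f w else 0)"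
    by (intro sum.cong) (auto simp: mon_def)
  also have "\<dots> = f w" using FreeAlgD(1)[OF \<open>f \<in> FreeAlg n\<close>] by (simp add: sum.delta')
  finally show "f w = (\<Sum>u\<in>supp f. f u * mon u w)" by simp
qed

lemma FreeAlg_fmul: assumes "f \<in> FreeAlg n" "g \<in> FreeAlg n" shows "f \<star> g \<in> FreeAlg n"
proof -
  have "f \<star> g = (\<lambda>w. \<Sum>u\<in>supp f. f u * (mon u \<star> g) w)"
    by (subst expand[OF assms(1)]) (simp add: fmul_sum_left)
  also have "\<dots> = (\<lambda>w. \<Sum>u\<in>supp f. f u * (\<lambda>w. \<Sum>v\<in>supp g. g v * mon (u @ v) w) w)"
    by (subst expand[OF assms(2)]) (simp add: fmul_sum_right mon_mul_mon)
  also have "\<dots> \<in> FreeAlg n"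
  proof (rule FreeAlg_lincomb)
    show "finite (supp f)" using assms(1) by (rule FreeAlgD(1))
    fix u assume u: "u \<in> supp f"
    show "(\<lambda>w. \<Sum>v\<in>supp g. g v * mon (u @ v) w) \<in> FreeAlg n"
    proof (rule FreeAlg_lincomb)
      show "finite (supp g)" using assms(2) by (rule FreeAlgD(1))
      fix v assume v: "v \<in> supp g"
      have "set u \<subseteq> {1..<n}" using u FreeAlgD(2)[OF assms(1)] by simp
      moreover have "set v \<subseteq> {1..<n}" using v FreeAlgD(2)[OF assms(2)] by simp
      ultimately show "mon (u @ v) \<in> FreeAlg n" by (intro mon_FreeAlg) simp
    qed
  qed
  finally show ?thesis .
qed

lemma FreeAlg_fadd: "f \<in> FreeAlg n \<Longrightarrow> g \<in> FreeAlg n \<Longrightarrow> fadd f g \<in> FreeAlg n"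
proof -
  assume a: "f \<in> FreeAlg n" "g \<in> FreeAlg n"
  have "fadd f g = (\<lambda>w. \<Sum>i\<in>{True,False}. 1 * (if i then f else g) w)"
    by (simp add: fadd_def)
  also have "\<dots> \<in> FreeAlg n" using a by (intro FreeAlg_lincomb) auto
  finally show ?thesis .
qed

lemma FreeAlg_fsmult: "f \<in> FreeAlg n \<Longrightarrow> fsmult c f \<in> FreeAlg n"
proof -
  assume a: "f \<in> FreeAlg n"
  have "fsmult c f = (\<lambda>w. \<Sum>i\<in>{()}. c * f w)"
    by (simp add: fsmult_def)
  also have "\<dots> \<in> FreeAlg n" using a FreeAlg_lincomb[of "{()}" "\<lambda>_. f" n "\<lambda>_. c"] by auto
  finally show ?thesis .
qed

lemma FreeAlg_fsub: "f \<in> FreeAlg n \<Longrightarrow> g \<in> FreeAlg n \<Longrightarrow> fsub f g \<in> FreeAlg n"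
proof -
  assume a: "f \<in> FreeAlg n" "g \<in> FreeAlg n"
  have "fsub f g = fadd f (fsmult (-1) g)" by (rule ext) (simp add: fadd_def fsub_def fsmult_def)
  then show ?thesis using a by (simp add: FreeAlg_fadd FreeAlg_fsmult)
qed

abbreviation I :: "nat \<Rightarrow> (nat list \<Rightarrow> rat) set" where "I \<equiv> NilCoxIdeal"

lemma I_fsub: "x \<in> I n \<Longrightarrow> y \<in> I n \<Longrightarrow> fsub x y \<in> I n"
proof -
  assume a: "x \<in> I n" "y \<in> I n"
  have "fsub x y = fadd x (fsmult (-1) y)" by (rule ext) (simp add: fadd_def fsub_def fsmult_def)
  then show ?thesis using a by (simp add: NilCoxIdeal.add NilCoxIdeal.smult)
qed

lemma I_lincomb:
  assumes "finite A" "\<And>i. i \<in> A \<Longrightarrow> g i \<in> I n"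
  shows "(\<lambda>w. \<Sum>i\<in>A. c i * g i w) \<in> I n"
  using assms
proof (induction A rule: finite_induct)
  case empty then show ?case by (simp add: NilCoxIdeal.zero)
next
  case (insert a F)
  have "(\<lambda>w. \<Sum>i\<in>insert a F. c i * g i w) = fadd (fsmult (c a) (g a)) (\<lambda>w. \<Sum>i\<in>F. c i * g i w)"
    using insert by (simp add: fadd_def fsmult_def)
  then show ?case using insert by (simp add: NilCoxIdeal.add NilCoxIdeal.smult)
qed

lemma I_twosided:
  assumes "x \<in> I n" "a \<in> FreeAlg n" "b \<in> FreeAlg n"
  shows "a \<star> x \<star> b \<in> I n"
  using assms(1)
proof (induction x rule: NilCoxIdeal.induct)
  case zero then show ?case by (simp add: fmul_zero_right fmul_zero_left NilCoxIdeal.zero)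
next
  case (gen r a' b')
  have "(a \<star> a') \<star> r \<star> (b' \<star> b) \<in> I n"
    using gen assms by (intro NilCoxIdeal.gen FreeAlg_fmul) auto
  then show ?case by (simp add: fmul_assoc)
next
  case (add x y) then show ?case by (simp add: fmul_fadd_left fmul_fadd_right NilCoxIdeal.add)
next
  case (smult x c) then show ?case by (simp add: fmul_fsmult_left fmul_fsmult_right NilCoxIdeal.smult)
qed

lemma I_left: "x \<in> I n \<Longrightarrow> a \<in> FreeAlg n \<Longrightarrow> a \<star> x \<in> I n"
  using I_twosided[of x n a "mon []"] by (simp add: mul_mon_Nil mon_FreeAlg)

lemma FreeAlg_mono: "FreeAlg m \<subseteq> FreeAlg (Suc m)"
proof -
  have "{1..<m} \<subseteq> {1..<Suc m}" by auto
  show ?thesis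
  proof
    fix f assume "f \<in> FreeAlg m"
    then show "f \<in> FreeAlg (Suc m)" unfolding FreeAlg_def using \<open>{1..<m} \<subseteq> {1..<Suc m}\<close>
      by (simp only: mem_Collect_eq) (meson subset_trans)
  qed
qed

lemma I_mono: "x \<in> I m \<Longrightarrow> x \<in> I (Suc m)"
proof (induction x rule: NilCoxIdeal.induct)
  case zero then show ?case by (rule NilCoxIdeal.zero)
next
  case (gen r a b)
  have "NilCoxRels m \<subseteq> NilCoxRels (Suc m)" unfolding NilCoxRels_def
    by (intro Un_mono Collect_mono impI; elim exE conjE; blast intro: less_SucI)
  then have "r \<in> NilCoxRels (Suc m)" using gen(1) by blast
  moreover have "a \<in> FreeAlg (Suc m)" "b \<in> FreeAlg (Suc m)" using gen(2,3) FreeAlg_mono by auto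
  ultimately show ?case by (rule NilCoxIdeal.gen)
next
  case (add x y) then show ?case by (simp add: NilCoxIdeal.add)
next
  case (smult x c) then show ?case by (simp add: NilCoxIdeal.smult)
qed



definition sw :: "nat \<Rightarrow> nat \<Rightarrow> nat" where
  "sw i x = (if x + 1 = i then i else if x = i \<and> 0 < i then i - 1 else x)"

fun perm :: "nat list \<Rightarrow> nat \<Rightarrow> nat" where
  "perm [] = id"
| "perm (i # w) = sw i \<circ> perm w"

definition w0 :: "nat \<Rightarrow> nat \<Rightarrow> nat" where
  "w0 n x = (if x < n then n - 1 - x else x)"

definition psi :: "nat \<Rightarrow> nat list \<Rightarrow> nat list" where
  "psi n w = map (\<lambda>i. n - i) w"

lemma sw_sw[simp]: "sw i (sw i x) = x"
  by (auto simp: sw_def split: if_splits)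

lemma w0_w0_apply[simp]: "w0 n (w0 n x) = x"
  by (simp add: w0_def)

lemma perm_append: "perm (u @ v) = perm u \<circ> perm v"
  by (induction u) auto

lemma perm_rev: "perm (rev w) \<circ> perm w = id"
proof (induction w)
  case Nil then show ?case by simp
next
  case (Cons i w)
  have "perm (rev (i # w)) \<circ> perm (i # w) = perm (rev w) \<circ> (sw i \<circ> sw i) \<circ> perm w"
    by (simp add: perm_append comp_assoc)
  also have "sw i \<circ> sw i = id" by (rule ext) simp
  finally show ?case using Cons by simp
qed

lemma perm_rev': "perm w \<circ> perm (rev w) = id"
  using perm_rev[of "rev w"] by simp

lemma perm_cancel_left: "perm u \<circ> f = perm u \<circ> g \<Longrightarrow> f = g"
proof -
  assume "perm u \<circ> f = perm u \<circ> g"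
  then have "perm (rev u) \<circ> perm u \<circ> f = perm (rev u) \<circ> perm u \<circ> g" by (simp add: comp_assoc)
  then show ?thesis by (simp add: perm_rev)
qed

lemma inj_perm: "inj (perm w)"
  by (metis inj_on_id inj_on_imageI2 perm_rev)

lemma w0_w0: "w0 n \<circ> w0 n = id"
  by (rule ext) (simp add: w0_def)

lemma sw_psi: "1 \<le> i \<Longrightarrow> i < n \<Longrightarrow> sw (n - i) = w0 n \<circ> sw i \<circ> w0 n"
  by (rule ext) (auto simp: sw_def w0_def)

lemma perm_psi: "set w \<subseteq> {1..<n} \<Longrightarrow> perm (psi n w) = w0 n \<circ> perm w \<circ> w0 n"
proof (induction w)
  case Nil then show ?case by (simp add: psi_def w0_w0)
next
  case (Cons i w)
  then show ?case by (auto simp: psi_def sw_psi fun_eq_iff)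
qed

lemma psi_Wd: "set w \<subseteq> {1..<n} \<Longrightarrow> set (psi n w) \<subseteq> {1..<n}"
  by (auto simp: psi_def subset_iff)

lemma sw_comm: "i + 1 < j \<or> j + 1 < i \<Longrightarrow> sw i \<circ> sw j = sw j \<circ> sw i"
  by (rule ext) (auto simp: sw_def)

lemma sw_braid: "1 \<le> i \<Longrightarrow> sw i \<circ> sw (i+1) \<circ> sw i = sw (i+1) \<circ> sw i \<circ> sw (i+1)"
  by (rule ext) (auto simp: sw_def)

definition ninv :: "nat \<Rightarrow> (nat \<Rightarrow> nat) \<Rightarrow> nat" where
  "ninv n s = card {(a,b). a < b \<and> b < n \<and> s b < s a}"

lemma sw_mono: "x \<noteq> y \<Longrightarrow> sw i x < sw i y \<Longrightarrow> x < y \<or> ({x, y} = {i - 1, i} \<and> 0 < i)"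
  by (auto simp: sw_def split: if_splits)

lemma inv_sw:
  assumes "inj s"
  shows "ninv n (sw i \<circ> s) \<le> ninv n s + 1"
proof -
  let ?P = "{(a,b). a < b \<and> b < n \<and> s b < s a}"
  let ?E = "{(a,b). a < b \<and> b < n \<and> {s a, s b} = {i - 1, i} \<and> 0 < i}"
  have fin: "finite ?P" "finite ?E"
    by (rule finite_subset[of _ "{..<n} \<times> {..<n}"]; auto)+
  have sub: "{(a,b). a < b \<and> b < n \<and> (sw i \<circ> s) b < (sw i \<circ> s) a} \<subseteq> ?P \<union> ?E"
  proof
    fix p assume p: "p \<in> {(a,b). a < b \<and> b < n \<and> (sw i \<circ> s) b < (sw i \<circ> s) a}"
    obtain a b where ab: "p = (a,b)" by force
    have "s a \<noteq> s b" using p ab assms by (auto dest: injD)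
    then have "s b < s a \<or> ({s b, s a} = {i - 1, i} \<and> 0 < i)"
      using p ab sw_mono[of "s b" "s a" i] by auto
    then show "p \<in> ?P \<union> ?E" using p ab by (auto simp: insert_commute)
  qed
  have E1: "card ?E \<le> Suc 0"
  proof (rule card_le_Suc0_iff_eq[OF fin(2), THEN iffD2], intro ballI)
    fix p q assume p: "p \<in> ?E" and q: "q \<in> ?E"
    obtain a b where ab: "p = (a,b)" by force
    obtain c d where cd: "q = (c,d)" by force
    have h: "a < b" "c < d" "{s a, s b} = {i - 1, i}" "{s c, s d} = {i - 1, i}" "0 < i"
      using p q ab cd by auto
    have "s a = s c \<and> s b = s d \<or> s a = s d \<and> s b = s c"
      using h(3,4,5) by (auto simp: doubleton_eq_iff)
    then have "a = c \<and> b = d \<or> a = d \<and> b = c" using assms by (auto dest: injD)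
    then show "p = q" using h ab cd by auto
  qed
  have "ninv n (sw i \<circ> s) \<le> card (?P \<union> ?E)"
    unfolding ninv_def by (rule card_mono) (use fin sub in auto)
  also have "\<dots> \<le> card ?P + card ?E" by (rule card_Un_le)
  finally show ?thesis using E1 unfolding ninv_def by simp
qed

lemma inv_perm: "ninv n (perm w) \<le> length w"
proof (induction w)
  case Nil
  show ?case by (auto simp: ninv_def card_eq_0_iff)
next
  case (Cons i w)
  then show ?case using inv_sw[OF inj_perm, of n i w] by (simp only: perm.simps length_Cons)
qed

fun NN :: "nat \<Rightarrow> nat" where
  "NN 0 = 0"
| "NN (Suc m) = NN m + m"

lemma inv_w0: "ninv n (w0 n) = NN n"
proof -
  have "{(a,b). a < b \<and> b < n \<and> w0 n b < w0 n a} = {(a,b). a < b \<and> b < n}"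
    by (auto simp: w0_def)
  moreover have "card {(a,b). a < b \<and> b < n} = NN n" for n :: nat
  proof (induction n)
    case 0 then show ?case by simp
  next
    case (Suc m)
    have "{(a,b). a < b \<and> b < Suc m} = {(a,b). a < b \<and> b < m} \<union> (\<lambda>a. (a,m)) ` {..<m}"
      by auto
    then have "card {(a,b). a < b \<and> b < Suc m} = card ({(a,b). a < b \<and> b < m} \<union> (\<lambda>a. (a,m)) ` {..<m})"
      by simp
    also have "\<dots> = card {(a,b). a < b \<and> b < m} + card ((\<lambda>a. (a,m)) ` {..<m})"
      by (rule card_Un_disjoint) (auto intro: finite_subset[of _ "{..<m} \<times> {..<m}"])
    also have "card ((\<lambda>a. (a,m)) ` {..<m}) = m" by (subst card_image) (auto simp: inj_on_def)
    finally show ?case using Suc by simp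
  qed
  ultimately show ?thesis unfolding ninv_def by simp
qed

lemma length_lower: "perm w = w0 n \<Longrightarrow> NN n \<le> length w"
  using inv_perm[of n w] inv_w0[of n] by simp



definition WN :: "nat \<Rightarrow> nat list set" where
  "WN n = {w. set w \<subseteq> {1..<n} \<and> length w = NN n}"

definition lamW :: "nat \<Rightarrow> nat list \<Rightarrow> rat" where
  "lamW n w = (if w \<in> WN n \<and> perm w = w0 n then 1 else 0)"

definition LAM :: "nat \<Rightarrow> (nat list \<Rightarrow> rat) \<Rightarrow> rat" where
  "LAM n f = (\<Sum>w\<in>WN n. f w * lamW n w)"

lemma finite_WN: "finite (WN n)"
  unfolding WN_def by (rule finite_lists_length_eq) simp

lemma LAM_mon: "LAM n (mon u) = lamW n u"
proof -
  have "LAM n (mon u) = (\<Sum>w\<in>WN n. if w = u then lamW n u else 0)"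
    unfolding LAM_def mon_def by (intro sum.cong) auto
  also have "\<dots> = lamW n u" using finite_WN by (simp add: sum.delta' lamW_def)
  finally show ?thesis .
qed

lemma LAM_lincomb: "LAM n (\<lambda>w. \<Sum>i\<in>A. c i * g i w) = (\<Sum>i\<in>A. c i * LAM n (g i))"
  unfolding LAM_def by (simp add: sum_distrib_right sum_distrib_left sum.swap[of _ A] mult.assoc)

lemma LAM_fadd: "LAM n (fadd f g) = LAM n f + LAM n g"
  unfolding LAM_def fadd_def by (simp add: distrib_right sum.distrib)
lemma LAM_fsub: "LAM n (fsub f g) = LAM n f - LAM n g"
  unfolding LAM_def fsub_def by (simp add: left_diff_distrib sum_subtractf)
lemma LAM_fsmult: "LAM n (fsmult c f) = c * LAM n f"
  unfolding LAM_def fsmult_def by (simp add: sum_distrib_left mult.assoc)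
lemma LAM_zero: "LAM n (\<lambda>_. 0) = 0"
  unfolding LAM_def by simp

lemma lamW_ii: "lamW n (u @ [i,i] @ s) = 0"
proof (rule ccontr)
  assume "lamW n (u @ [i,i] @ s) \<noteq> 0"
  then have h: "length (u @ [i,i] @ s) = NN n" "perm (u @ [i,i] @ s) = w0 n"
    by (auto simp: lamW_def WN_def split: if_splits)
  have "perm (u @ [i,i] @ s) = perm (u @ s)"
    by (simp add: perm_append fun_eq_iff)
  then have "NN n \<le> length (u @ s)" using h(2) length_lower by metis
  then show False using h(1) by simp
qed

lemma lamW_rel:
  assumes "perm x = perm y" "length x = length y" "set x = set y"
  shows "lamW n (u @ x @ s) = lamW n (u @ y @ s)"
  using assms by (simp add: lamW_def WN_def perm_append)

lemma LAM_bilin: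
  assumes "a \<in> FreeAlg n" "b \<in> FreeAlg n" "\<And>u s. LAM n (mon u \<star> r \<star> mon s) = 0"
  shows "LAM n (a \<star> r \<star> b) = 0"
proof -
  have "a \<star> r \<star> b = (\<lambda>w. \<Sum>u\<in>supp a. a u * (mon u \<star> r \<star> b) w)"
    by (subst expand[OF assms(1)]) (simp add: fmul_sum_left)
  then have "LAM n (a \<star> r \<star> b) = (\<Sum>u\<in>supp a. a u * LAM n (mon u \<star> r \<star> b))"
    by (simp add: LAM_lincomb)
  also have "\<dots> = 0"
  proof (intro sum.neutral ballI)
    fix u
    have "mon u \<star> r \<star> b = (\<lambda>w. \<Sum>s\<in>supp b. b s * (mon u \<star> r \<star> mon s) w)"
      by (subst expand[OF assms(2)]) (simp add: fmul_sum_right)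
    then have "LAM n (mon u \<star> r \<star> b) = 0" by (simp add: LAM_lincomb assms(3))
    then show "a u * LAM n (mon u \<star> r \<star> b) = 0" by simp
  qed
  finally show ?thesis .
qed

lemma KL:
  assumes "r \<in> NilCoxRels n" "a \<in> FreeAlg n" "b \<in> FreeAlg n"
  shows "LAM n (a \<star> r \<star> b) = 0"
proof (rule LAM_bilin[OF assms(2,3)])
  fix u s
  from assms(1) show "LAM n (mon u \<star> r \<star> mon s) = 0"
    unfolding NilCoxRels_def
  proof (elim UnE CollectE exE conjE)
    fix i assume "r = Ygen i \<star> Ygen i"
    then have "mon u \<star> r \<star> mon s = mon (u @ [i,i] @ s)" by (simp add: Ygen_mon mon_mul_mon)
    then show ?thesis using lamW_ii[of n u i s] by (simp add: LAM_mon)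
  next
    fix i j assume r: "r = fsub (Ygen i \<star> Ygen j) (Ygen j \<star> Ygen i)" and c: "i + 1 < j \<or> j + 1 < i"
    then have "mon u \<star> r \<star> mon s = fsub (mon (u @ [i,j] @ s)) (mon (u @ [j,i] @ s))"
      by (simp add: Ygen_mon mon_mul_mon fmul_fsub_left fmul_fsub_right)
    moreover have "lamW n (u @ [i,j] @ s) = lamW n (u @ [j,i] @ s)"
      by (rule lamW_rel) (simp_all add: sw_comm[OF c] insert_commute)
    ultimately show ?thesis by (simp add: LAM_fsub LAM_mon)
  next
    fix i assume r: "r = fsub (Ygen i \<star> Ygen (i+1) \<star> Ygen i) (Ygen (i+1) \<star> Ygen i \<star> Ygen (i+1))"
      and c: "1 \<le> i"
    then have "mon u \<star> r \<star> mon s = fsub (mon (u @ [i,i+1,i] @ s)) (mon (u @ [i+1,i,i+1] @ s))"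
      by (simp add: Ygen_mon mon_mul_mon fmul_fsub_left fmul_fsub_right)
    moreover have "lamW n (u @ [i,i+1,i] @ s) = lamW n (u @ [i+1,i,i+1] @ s)"
      by (rule lamW_rel) (use sw_braid[OF c] in \<open>simp_all add: comp_assoc insert_commute\<close>)
    ultimately show ?thesis by (simp add: LAM_fsub LAM_mon)
  qed
qed

lemma LAM_I:
  assumes "x \<in> I n" "a \<in> FreeAlg n" "b \<in> FreeAlg n"
  shows "LAM n (a \<star> x \<star> b) = 0"
  using assms(1)
proof (induction x rule: NilCoxIdeal.induct)
  case zero then show ?case by (simp add: fmul_zero_right fmul_zero_left LAM_zero)
next
  case (gen r a' b')
  have "LAM n ((a \<star> a') \<star> r \<star> (b' \<star> b)) = 0"
    using gen assms by (intro KL FreeAlg_fmul) auto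
  then show ?case by (simp add: fmul_assoc)
next
  case (add x y) then show ?case by (simp add: fmul_fadd_left fmul_fadd_right LAM_fadd)
next
  case (smult x c) then show ?case by (simp add: fmul_fsmult_left fmul_fsmult_right LAM_fsmult)
qed

lemma psi_psi: "set w \<subseteq> {..n} \<Longrightarrow> psi n (psi n w) = w"
  by (induction w) (auto simp: psi_def)

lemma psiF_expand:
  assumes "b \<in> FreeAlg n"
  shows "psiF n b = (\<lambda>w. \<Sum>s\<in>supp b. b s * mon (psi n s) w)"
proof (rule ext)
  fix w
  have "(\<Sum>s\<in>supp b. b s * mon (psi n s) w) = (\<Sum>s\<in>supp b. if s = psi n w then b (psi n w) else 0)"
  proof (intro sum.cong refl)
    fix s assume s: "s \<in> supp b"
    then have ss: "set s \<subseteq> {1..<n}" using FreeAlgD(2)[OF assms] by simp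
    have "w = psi n s \<longleftrightarrow> s = psi n w"
    proof
      assume "w = psi n s"
      moreover have "set s \<subseteq> {..n}" using ss by auto
      ultimately show "s = psi n w" using psi_psi[of s n] by auto
    next
      assume h: "s = psi n w"
      then have "set w \<subseteq> {..n}" using ss by (auto simp: psi_def subset_iff)
      then show "w = psi n s" using h psi_psi by simp
    qed
    then show "b s * mon (psi n s) w = (if s = psi n w then b (psi n w) else 0)"
      by (auto simp: mon_def)
  qed
  also have "\<dots> = b (psi n w)" using FreeAlgD(1)[OF assms] by (simp add: sum.delta')
  finally show "psiF n b w = (\<Sum>s\<in>supp b. b s * mon (psi n s) w)"
    by (simp add: psiF_def psi_def)
qed

lemma perm_twist:
  assumes u: "set u \<subseteq> {1..<n}" and s: "set s \<subseteq> {1..<n}"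
  shows "perm (u @ psi n s) = w0 n \<longleftrightarrow> perm (s @ u) = w0 n"
proof -
  let ?A = "perm u" and ?A' = "perm (rev u)" and ?S = "perm s" and ?S' = "perm (rev s)" and ?W = "w0 n"
  have AA: "?A' \<circ> ?A = id" "?A \<circ> ?A' = id" by (simp_all add: perm_rev perm_rev')
  have SS: "?S' \<circ> ?S = id" "?S \<circ> ?S' = id" by (simp_all add: perm_rev perm_rev')
  have WW: "?W \<circ> ?W = id" by (rule w0_w0)
  have eq: "perm (u @ psi n s) = ?A \<circ> ?W \<circ> ?S \<circ> ?W" using s by (simp add: perm_append perm_psi comp_assoc)
  have eq2: "perm (s @ u) = ?S \<circ> ?A" by (simp add: perm_append)
  show ?thesis unfolding eq eq2
  proof
    assume h: "?A \<circ> ?W \<circ> ?S \<circ> ?W = ?W"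
    have "?A \<circ> ?W \<circ> ?S = ?A \<circ> ?W \<circ> ?S \<circ> (?W \<circ> ?W)" by (simp add: WW)
    also have "\<dots> = (?A \<circ> ?W \<circ> ?S \<circ> ?W) \<circ> ?W" by (simp only: comp_assoc)
    also have "\<dots> = ?W \<circ> ?W" using h by simp
    finally have h2: "?A \<circ> ?W \<circ> ?S = id" using WW by simp
    have "?W \<circ> ?S = (?A' \<circ> ?A) \<circ> ?W \<circ> ?S" by (simp add: AA)
    also have "\<dots> = ?A' \<circ> (?A \<circ> ?W \<circ> ?S)" by (simp add: comp_assoc)
    finally have h3: "?W \<circ> ?S = ?A'" using h2 by simp
    have "?S \<circ> ?A = (?W \<circ> ?W) \<circ> ?S \<circ> ?A" by (simp add: WW)
    also have "\<dots> = ?W \<circ> (?W \<circ> ?S) \<circ> ?A" by (simp add: comp_assoc)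
    also have "\<dots> = ?W" using h3 AA by (simp add: comp_assoc)
    finally show "?S \<circ> ?A = ?W" .
  next
    assume h: "?S \<circ> ?A = ?W"
    have "?A = (?S' \<circ> ?S) \<circ> ?A" by (simp add: SS)
    also have "\<dots> = ?S' \<circ> ?W" using h by (simp add: comp_assoc)
    finally have hA: "?A = ?S' \<circ> ?W" .
    have "?A \<circ> ?W \<circ> ?S \<circ> ?W = ?S' \<circ> (?W \<circ> ?W) \<circ> ?S \<circ> ?W" by (simp add: hA comp_assoc)
    also have "\<dots> = (?S' \<circ> ?S) \<circ> ?W" by (simp add: WW comp_assoc)
    also have "\<dots> = ?W" by (simp add: SS)
    finally show "?A \<circ> ?W \<circ> ?S \<circ> ?W = ?W" .
  qed
qed

lemma lamW_twist:
  assumes u: "set u \<subseteq> {1..<n}" and s: "set s \<subseteq> {1..<n}"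
  shows "lamW n (u @ psi n s) = lamW n (s @ u)"
  using perm_twist[OF assms] psi_Wd[OF s] u s by (auto simp: lamW_def WN_def psi_def)

lemma TT:
  assumes x: "x \<in> FreeAlg n" and b: "b \<in> FreeAlg n"
  shows "LAM n (x \<star> psiF n b) = LAM n (b \<star> x)"
proof -
  have "x \<star> psiF n b = (\<lambda>w. \<Sum>u\<in>supp x. x u * (\<lambda>w. \<Sum>s\<in>supp b. b s * mon (u @ psi n s) w) w)"
    by (subst expand[OF x], subst psiF_expand[OF b]) (simp add: fmul_sum_left fmul_sum_right mon_mul_mon)
  then have "LAM n (x \<star> psiF n b) = (\<Sum>u\<in>supp x. x u * (\<Sum>s\<in>supp b. b s * lamW n (u @ psi n s)))"
    by (simp add: LAM_lincomb LAM_mon)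
  also have "\<dots> = (\<Sum>u\<in>supp x. x u * (\<Sum>s\<in>supp b. b s * lamW n (s @ u)))"
    using FreeAlgD(2)[OF x] FreeAlgD(2)[OF b] by (intro sum.cong refl arg_cong2[where f="(*)"]) (auto simp: lamW_twist)
  also have "\<dots> = (\<Sum>s\<in>supp b. b s * (\<Sum>u\<in>supp x. x u * lamW n (s @ u)))"
    by (simp add: sum_distrib_left sum.swap[of _ "supp x"] mult.left_commute)
  also have "\<dots> = LAM n (b \<star> x)"
  proof -
    have "b \<star> x = (\<lambda>w. \<Sum>s\<in>supp b. b s * (\<lambda>w. \<Sum>u\<in>supp x. x u * mon (s @ u) w) w)"
      by (subst expand[OF x], subst expand[OF b]) (simp add: fmul_sum_left fmul_sum_right mon_mul_mon)
    then show ?thesis by (simp add: LAM_lincomb LAM_mon)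
  qed
  finally show ?thesis .
qed



declare upt_Suc[simp del]

fun NF :: "nat \<Rightarrow> nat list set" where
  "NF 0 = {[]}"
| "NF (Suc m) = {[k..<Suc m] @ u | k u. 1 \<le> k \<and> k \<le> Suc m \<and> u \<in> NF m}"

declare NF.simps(2)[simp del]

lemma NF_SucE: "v \<in> NF (Suc m) \<Longrightarrow> \<exists>k u. v = [k..<Suc m] @ u \<and> 1 \<le> k \<and> k \<le> Suc m \<and> u \<in> NF m"
  by (simp only: NF.simps) blast

lemma NF_SucI: "1 \<le> k \<Longrightarrow> k \<le> Suc m \<Longrightarrow> u \<in> NF m \<Longrightarrow> [k..<Suc m] @ u \<in> NF (Suc m)"
  by (simp only: NF.simps) blast

lemma upt_split: "i \<le> j \<Longrightarrow> j \<le> k \<Longrightarrow> [i..<k] = [i..<j] @ [j..<k]"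
  using upt_add_eq_append[of i j "k - j"] by simp

lemma NF_Wd: "v \<in> NF n \<Longrightarrow> set v \<subseteq> {1..<n}"
proof (induction n arbitrary: v)
  case 0 then show ?case by simp
next
  case (Suc m)
  then obtain k u where "v = [k..<Suc m] @ u" "1 \<le> k" "u \<in> NF m" using NF_SucE by blast
  with Suc.IH[of u] show ?case by auto
qed

lemma finite_NF: "finite (NF n)"
proof (induction n)
  case 0 then show ?case by simp
next
  case (Suc m)
  have "NF (Suc m) = (\<lambda>(k,u). [k..<Suc m] @ u) ` ({1..Suc m} \<times> NF m)"
    by (auto intro!: NF_SucI dest!: NF_SucE)
  then show ?case using Suc by simp
qed

lemma Nil_NF: "[] \<in> NF n"
proof (induction n)
  case 0 then show ?case by simp
next
  case (Suc m)
  then show ?case using NF_SucI[of "Suc m" m "[]"] by simp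
qed

definition cg :: "nat \<Rightarrow> nat list \<Rightarrow> nat list \<Rightarrow> bool" where
  "cg n x y \<longleftrightarrow> fsub (mon x) (mon y) \<in> I n"
definition zr :: "nat \<Rightarrow> nat list \<Rightarrow> bool" where
  "zr n x \<longleftrightarrow> mon x \<in> I n"

lemma cg_refl: "cg n x x"
proof -
  have "fsub (mon x) (mon x) = (\<lambda>_. 0)" by (rule ext) (simp add: fsub_def)
  then show ?thesis by (simp add: cg_def NilCoxIdeal.zero)
qed

lemma cg_sym: "cg n x y \<Longrightarrow> cg n y x"
proof -
  assume "cg n x y"
  moreover have "fsub (mon y) (mon x) = fsmult (-1) (fsub (mon x) (mon y))"
    by (rule ext) (simp add: fsub_def fsmult_def)
  ultimately show ?thesis by (simp add: cg_def NilCoxIdeal.smult)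
qed

lemma cg_trans: "cg n x y \<Longrightarrow> cg n y z \<Longrightarrow> cg n x z"
proof -
  assume "cg n x y" "cg n y z"
  moreover have "fsub (mon x) (mon z) = fadd (fsub (mon x) (mon y)) (fsub (mon y) (mon z))"
    by (rule ext) (simp add: fsub_def fadd_def)
  ultimately show ?thesis by (simp add: cg_def NilCoxIdeal.add)
qed

lemma cg_zr: "cg n x y \<Longrightarrow> zr n y \<Longrightarrow> zr n x"
proof -
  assume "cg n x y" "zr n y"
  moreover have "mon x = fadd (fsub (mon x) (mon y)) (mon y)"
    by (rule ext) (simp add: fsub_def fadd_def)
  ultimately show ?thesis unfolding cg_def zr_def by (metis NilCoxIdeal.add)
qed

lemma cg_ctx:
  assumes "cg n x y" "set p \<subseteq> {1..<n}" "set s \<subseteq> {1..<n}"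
  shows "cg n (p @ x @ s) (p @ y @ s)"
proof -
  have "mon p \<star> fsub (mon x) (mon y) \<star> mon s \<in> I n"
    using assms by (intro I_twosided mon_FreeAlg) (auto simp: cg_def)
  then show ?thesis by (simp add: cg_def fmul_fsub_left fmul_fsub_right mon_mul_mon)
qed

lemma zr_ctx:
  assumes "zr n x" "set p \<subseteq> {1..<n}" "set s \<subseteq> {1..<n}"
  shows "zr n (p @ x @ s)"
proof -
  have "mon p \<star> mon x \<star> mon s \<in> I n"
    using assms by (intro I_twosided mon_FreeAlg) (auto simp: zr_def)
  then show ?thesis by (simp add: zr_def mon_mul_mon)
qed

lemma cg_mono: "cg m x y \<Longrightarrow> cg (Suc m) x y" by (simp add: cg_def I_mono)
lemma zr_mono: "zr m x \<Longrightarrow> zr (Suc m) x" by (simp add: zr_def I_mono)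

lemma gen_mon:
  assumes "r \<in> NilCoxRels n" "set p \<subseteq> {1..<n}" "set s \<subseteq> {1..<n}"
  shows "mon p \<star> r \<star> mon s \<in> I n"
  using assms by (intro NilCoxIdeal.gen mon_FreeAlg)

lemma cg_comm:
  assumes "1 \<le> i" "i < n" "1 \<le> j" "j < n" "i + 1 < j \<or> j + 1 < i" "set p \<subseteq> {1..<n}" "set s \<subseteq> {1..<n}"
  shows "cg n (p @ [i,j] @ s) (p @ [j,i] @ s)"
proof -
  have "fsub (Ygen i \<star> Ygen j) (Ygen j \<star> Ygen i) \<in> NilCoxRels n"
    using assms unfolding NilCoxRels_def by blast
  from gen_mon[OF this assms(6,7)] show ?thesis
    by (simp add: cg_def Ygen_mon fmul_fsub_left fmul_fsub_right mon_mul_mon)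
qed

lemma cg_braid:
  assumes "1 \<le> i" "i + 1 < n" "set p \<subseteq> {1..<n}" "set s \<subseteq> {1..<n}"
  shows "cg n (p @ [i,i+1,i] @ s) (p @ [i+1,i,i+1] @ s)"
proof -
  have "fsub (Ygen i \<star> Ygen (i+1) \<star> Ygen i) (Ygen (i+1) \<star> Ygen i \<star> Ygen (i+1)) \<in> NilCoxRels n"
    using assms unfolding NilCoxRels_def by blast
  from gen_mon[OF this assms(3,4)] show ?thesis
    by (simp add: cg_def Ygen_mon fmul_fsub_left fmul_fsub_right mon_mul_mon)
qed

lemma zr_ii:
  assumes "1 \<le> i" "i < n" "set p \<subseteq> {1..<n}" "set s \<subseteq> {1..<n}"
  shows "zr n (p @ [i,i] @ s)"
proof -
  have "Ygen i \<star> Ygen i \<in> NilCoxRels n"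
    using assms unfolding NilCoxRels_def by blast
  from gen_mon[OF this assms(3,4)] show ?thesis
    by (simp add: zr_def Ygen_mon mon_mul_mon)
qed

lemma commute_past:
  assumes "1 \<le> j" "j < n" "set c \<subseteq> {1..<n}" "\<forall>x\<in>set c. j + 1 < x \<or> x + 1 < j"
    "set p \<subseteq> {1..<n}" "set s \<subseteq> {1..<n}"
  shows "cg n (p @ j # c @ s) (p @ c @ j # s)"
  using assms
proof (induction c arbitrary: p)
  case Nil then show ?case by (simp add: cg_refl)
next
  case (Cons x c)
  have 1: "cg n (p @ [j,x] @ (c @ s)) (p @ [x,j] @ (c @ s))"
    using Cons.prems by (intro cg_comm) auto
  have 2: "cg n ((p @ [x]) @ j # c @ s) ((p @ [x]) @ c @ j # s)"
    using Cons.prems by (intro Cons.IH) auto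
  show ?case using cg_trans[OF 1[simplified] 2[simplified]] by simp
qed

definition SP :: "nat \<Rightarrow> bool" where
  "SP m \<longleftrightarrow> (\<forall>w. set w \<subseteq> {1..<m} \<longrightarrow> zr m w \<or> (\<exists>v\<in>NF m. cg m w v))"

lemma finish:
  assumes "SP m" "set w \<subseteq> {1..<m}" "cg (Suc m) x (c @ w)" "1 \<le> k" "k \<le> Suc m" "c = [k..<Suc m]"
  shows "zr (Suc m) x \<or> (\<exists>v'\<in>NF (Suc m). cg (Suc m) x v')"
proof -
  have cs: "set c \<subseteq> {1..<Suc m}" using assms by auto
  from assms(1,2) have "zr m w \<or> (\<exists>v\<in>NF m. cg m w v)" by (simp add: SP_def)
  then show ?thesis
  proof
    assume "zr m w"
    then have "zr (Suc m) (c @ w @ [])" by (intro zr_ctx zr_mono cs) auto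
    then show ?thesis using cg_zr[OF assms(3)] by simp
  next
    assume "\<exists>v\<in>NF m. cg m w v"
    then obtain v where v: "v \<in> NF m" "cg m w v" by blast
    then have "cg (Suc m) (c @ w @ []) (c @ v @ [])" by (intro cg_ctx cg_mono cs) auto
    then have "cg (Suc m) x (c @ v)" using cg_trans[OF assms(3)] by simp
    moreover have "c @ v \<in> NF (Suc m)" using v assms by (simp add: NF_SucI)
    ultimately show ?thesis by blast
  qed
qed

lemma step:
  assumes SPm: "SP m" and v: "v \<in> NF (Suc m)" and j: "1 \<le> j" "j \<le> m"
  shows "zr (Suc m) (j # v) \<or> (\<exists>v'\<in>NF (Suc m). cg (Suc m) (j # v) v')"
proof -
  obtain k u where ku: "v = [k..<Suc m] @ u" "1 \<le> k" "k \<le> Suc m" "u \<in> NF m" using NF_SucE[OF v] by blast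
  have uW: "set u \<subseteq> {1..<m}" using NF_Wd[OF ku(4)] .
  have uW': "set u \<subseteq> {1..<Suc m}" using uW by auto
  consider "j + 1 = k" | "j = k" | "j + 1 < k" | "k < j" by linarith
  then show ?thesis
  proof cases
    case 1
    then have "j # v = [j..<Suc m] @ u" using ku j by (simp add: upt_conv_Cons)
    moreover have "[j..<Suc m] @ u \<in> NF (Suc m)" using ku j by (simp add: NF_SucI)
    ultimately show ?thesis using cg_refl by metis
  next
    case 2
    then have "j # v = [] @ [k,k] @ ([Suc k..<Suc m] @ u)" using ku j by (simp add: upt_conv_Cons)
    moreover have "zr (Suc m) ([] @ [k,k] @ ([Suc k..<Suc m] @ u))"
    proof (rule zr_ii)
      show "set ([Suc k..<Suc m] @ u) \<subseteq> {1..<Suc m}" using uW' ku by auto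
    qed (use ku j 2 in auto)
    ultimately show ?thesis by simp
  next
    case 3
    have "cg (Suc m) ([] @ j # [k..<Suc m] @ u) ([] @ [k..<Suc m] @ j # u)"
      using ku j 3 uW' by (intro commute_past) auto
    then have "cg (Suc m) (j # v) ([k..<Suc m] @ (j # u))" using ku by simp
    moreover have "set (j # u) \<subseteq> {1..<m}" using uW j 3 ku by auto
    ultimately show ?thesis using finish[OF SPm] ku by blast
  next
    case 4
    let ?a = "[k..<j-1]" and ?r = "[Suc j..<Suc m]"
    have split: "[k..<Suc m] = ?a @ [j-1, j] @ ?r"
    proof -
      have "[k..<Suc m] = ?a @ [j-1..<Suc m]" by (rule upt_split) (use 4 j in auto)
      moreover have "[j-1..<Suc m] = [j-1, j] @ ?r" using 4 j by (simp add: upt_conv_Cons)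
      ultimately show ?thesis by simp
    qed
    have aW: "set ?a \<subseteq> {1..<Suc m}" "set ?r \<subseteq> {1..<Suc m}" using ku j by auto
    have e: "(j-1)+1 = j" using 4 by simp
    have j1: "1 \<le> j - 1" "j - 1 < Suc m" "j < Suc m" using 4 j ku by auto
    have h1: "\<forall>x\<in>set ?a. j + 1 < x \<or> x + 1 < j" by auto
    have h2: "set ([j-1, j] @ ?r @ u) \<subseteq> {1..<Suc m}" using uW' j 4 ku by auto
    have h3: "set (?r @ u) \<subseteq> {1..<Suc m}" using uW' by auto
    have h4: "\<forall>x\<in>set ?r. (j-1) + 1 < x \<or> x + 1 < j - 1" using e by auto
    have h5: "set (?a @ [j-1, j]) \<subseteq> {1..<Suc m}" using aW j1 by auto
    have c1: "cg (Suc m) ([] @ j # ?a @ ([j-1, j] @ ?r @ u)) ([] @ ?a @ j # ([j-1, j] @ ?r @ u))"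
      using commute_past[of j "Suc m" ?a "[]" "[j-1, j] @ ?r @ u"] j h1 h2 aW j1 by simp
    have c2: "cg (Suc m) (?a @ [j, j-1, j] @ (?r @ u)) (?a @ [j-1, j, j-1] @ (?r @ u))"
    proof -
      have "cg (Suc m) (?a @ [j-1, (j-1)+1, j-1] @ (?r @ u)) (?a @ [(j-1)+1, j-1, (j-1)+1] @ (?r @ u))"
        using cg_braid[of "j-1" "Suc m" ?a "?r @ u"] j1 aW h3 e by simp
      then show ?thesis unfolding e by (rule cg_sym)
    qed
    have c3: "cg (Suc m) ((?a @ [j-1, j]) @ (j-1) # ?r @ u) ((?a @ [j-1, j]) @ ?r @ (j-1) # u)"
      using commute_past[of "j-1" "Suc m" ?r "?a @ [j-1, j]" u] j1 aW h4 h5 uW' by simp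
    have "cg (Suc m) (j # v) ([k..<Suc m] @ ((j-1) # u))"
    proof -
      have "cg (Suc m) (j # v) (?a @ [j-1, j, j-1] @ (?r @ u))"
        using cg_trans[OF c1[simplified] c2[simplified]] ku split by simp
      moreover have "cg (Suc m) (?a @ [j-1, j, j-1] @ (?r @ u)) ([k..<Suc m] @ ((j-1) # u))"
        using c3 split by simp
      ultimately show ?thesis by (rule cg_trans)
    qed
    moreover have "set ((j-1) # u) \<subseteq> {1..<m}" using uW j 4 ku by auto
    ultimately show ?thesis using finish[OF SPm] ku by blast
  qed
qed

lemma SP_all: "SP n"
proof (induction n)
  case 0
  show ?case unfolding SP_def by (auto intro: cg_refl)
next
  case (Suc m)
  have "zr (Suc m) w \<or> (\<exists>v\<in>NF (Suc m). cg (Suc m) w v)" if "set w \<subseteq> {1..<Suc m}" for w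
    using that
  proof (induction w)
    case Nil
    then show ?case using Nil_NF cg_refl by blast
  next
    case (Cons j w)
    then have j: "1 \<le> j" "j \<le> m" and wW: "set w \<subseteq> {1..<Suc m}" by auto
    from Cons.IH[OF wW] show ?case
    proof
      assume "zr (Suc m) w"
      then have "zr (Suc m) ([j] @ w @ [])" using j by (intro zr_ctx) auto
      then show ?thesis by simp
    next
      assume "\<exists>v\<in>NF (Suc m). cg (Suc m) w v"
      then obtain v where v: "v \<in> NF (Suc m)" "cg (Suc m) w v" by blast
      then have c: "cg (Suc m) ([j] @ w @ []) ([j] @ v @ [])" using j by (intro cg_ctx) auto
      from step[OF Suc.IH v(1) j] show ?thesis
      proof
        assume "zr (Suc m) (j # v)"
        then show ?thesis using cg_zr[OF c] by simp
      next
        assume "\<exists>v'\<in>NF (Suc m). cg (Suc m) (j # v) v'"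
        then show ?thesis using cg_trans[OF c] by auto
      qed
    qed
  qed
  then show ?case by (simp add: SP_def)
qed



definition rho :: "nat \<Rightarrow> nat \<Rightarrow> nat" where
  "rho m x = (if x < m then x + 1 else if x = m then 0 else x)"

lemma perm_rho: "perm [1..<Suc m] = rho m"
proof (induction m)
  case 0 then show ?case by (rule ext) (simp add: rho_def)
next
  case (Suc m)
  have "[1..<Suc (Suc m)] = [1..<Suc m] @ [Suc m]" by (simp add: upt_Suc)
  then have "perm [1..<Suc (Suc m)] = rho m \<circ> sw (Suc m)" using Suc by (simp add: perm_append)
  then show ?case by (auto simp: fun_eq_iff rho_def sw_def)
qed

lemma perm_shift: "set y \<subseteq> {1..<m} \<Longrightarrow> perm (map Suc y) \<circ> rho m = rho m \<circ> perm y"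
proof (induction y)
  case Nil then show ?case by simp
next
  case (Cons i y)
  then have i: "1 \<le> i" "i < m" and ys: "set y \<subseteq> {1..<m}" by auto
  note IH = Cons.IH[OF ys]
  have sw: "sw (Suc i) \<circ> rho m = rho m \<circ> sw i"
    using i by (auto simp: fun_eq_iff rho_def sw_def)
  have "perm (map Suc (i # y)) \<circ> rho m = sw (Suc i) \<circ> (perm (map Suc y) \<circ> rho m)" by (simp add: comp_assoc)
  also have "\<dots> = (sw (Suc i) \<circ> rho m) \<circ> perm y" by (simp only: IH comp_assoc)
  also have "\<dots> = rho m \<circ> perm (i # y)" by (simp add: sw comp_assoc)
  finally show ?case .
qed

lemma rho_w0: "rho m \<circ> w0 m = w0 (Suc m)"
  by (auto simp: fun_eq_iff rho_def w0_def)

lemma complement: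
  "v \<in> NF n \<Longrightarrow> \<exists>y. set y \<subseteq> {1..<n} \<and> perm y \<circ> perm v = w0 n \<and> length y + length v = NN n"
proof (induction n arbitrary: v)
  case 0 then show ?case by (auto simp: fun_eq_iff w0_def)
next
  case (Suc m)
  obtain k u where ku: "v = [k..<Suc m] @ u" "1 \<le> k" "k \<le> Suc m" "u \<in> NF m" using NF_SucE[OF Suc.prems] by blast
  obtain yu where yu: "set yu \<subseteq> {1..<m}" "perm yu \<circ> perm u = w0 m" "length yu + length u = NN m"
    using Suc.IH[OF ku(4)] by blast
  let ?y = "map Suc yu @ [1..<k]"
  have "set ?y \<subseteq> {1..<Suc m}" using yu ku by auto
  moreover have "perm ?y \<circ> perm v = w0 (Suc m)"
  proof -
    have "perm [1..<k] \<circ> perm [k..<Suc m] = rho m"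
      using ku perm_rho[of m] upt_split[of 1 k "Suc m"] by (simp add: perm_append[symmetric])
    have "perm ?y \<circ> perm v = perm (map Suc yu) \<circ> (perm [1..<k] \<circ> perm [k..<Suc m]) \<circ> perm u"
      using ku by (simp add: perm_append comp_assoc)
    also have "\<dots> = perm (map Suc yu) \<circ> rho m \<circ> perm u" using \<open>perm [1..<k] \<circ> perm [k..<Suc m] = rho m\<close> by simp
    also have "\<dots> = rho m \<circ> (perm yu \<circ> perm u)" using perm_shift[OF yu(1)] by (simp add: comp_assoc)
    also have "\<dots> = w0 (Suc m)" using yu(2) rho_w0 by simp
    finally show ?thesis .
  qed
  moreover have "length ?y + length v = NN (Suc m)" using yu ku by simp
  ultimately show ?case by blast
qed

lemma perm_fix: "set w \<subseteq> {1..<m} \<Longrightarrow> m \<le> x \<Longrightarrow> perm w x = x"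
  by (induction w) (auto simp: sw_def)

lemma chain_val: "1 \<le> k \<Longrightarrow> k \<le> Suc m \<Longrightarrow> perm [k..<Suc m] m = k - 1"
proof (induction "Suc m - k" arbitrary: k)
  case 0 then show ?case by simp
next
  case (Suc d)
  then have "[k..<Suc m] = k # [Suc k..<Suc m]" by (simp add: upt_conv_Cons)
  moreover have "perm [Suc k..<Suc m] m = k" using Suc.hyps(1)[of "Suc k"] Suc.hyps(2) Suc.prems by simp
  ultimately show ?case using Suc by (simp add: sw_def)
qed

lemma NF_inj: "v \<in> NF n \<Longrightarrow> v' \<in> NF n \<Longrightarrow> perm v = perm v' \<Longrightarrow> v = v'"
proof (induction n arbitrary: v v')
  case 0 then show ?case by simp
next
  case (Suc m)
  obtain k u where ku: "v = [k..<Suc m] @ u" "1 \<le> k" "k \<le> Suc m" "u \<in> NF m" using NF_SucE[OF Suc.prems(1)] by blast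
  obtain k' u' where ku': "v' = [k'..<Suc m] @ u'" "1 \<le> k'" "k' \<le> Suc m" "u' \<in> NF m" using NF_SucE[OF Suc.prems(2)] by blast
  have "perm v m = k - 1" using ku perm_fix[OF NF_Wd[OF ku(4)], of m] chain_val[of k m] by (simp add: perm_append)
  moreover have "perm v' m = k' - 1" using ku' perm_fix[OF NF_Wd[OF ku'(4)], of m] chain_val[of k' m] by (simp add: perm_append)
  ultimately have "k = k'" using Suc.prems(3) ku ku' by simp
  then have "perm [k..<Suc m] \<circ> perm u = perm [k..<Suc m] \<circ> perm u'" using Suc.prems(3) ku ku' by (simp add: perm_append fun_eq_iff)
  then have "perm u = perm u'" by (rule perm_cancel_left)
  then have "u = u'" using Suc.IH ku ku' by blast
  then show ?case using ku ku' \<open>k = k'\<close> by simp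
qed



definition yv :: "nat \<Rightarrow> nat list \<Rightarrow> nat list" where
  "yv n v = (SOME y. set y \<subseteq> {1..<n} \<and> perm y \<circ> perm v = w0 n \<and> length y + length v = NN n)"

lemma yv: assumes "v \<in> NF n"
  shows "set (yv n v) \<subseteq> {1..<n}" "perm (yv n v) \<circ> perm v = w0 n" "length (yv n v) + length v = NN n"
  using someI_ex[OF complement[OF assms]] unfolding yv_def by blast+

lemma delta:
  assumes v: "v \<in> NF n" and v': "v' \<in> NF n"
  shows "lamW n (yv n v @ v') = (if v' = v then 1 else 0)"
proof (cases "v' = v")
  case True
  then show ?thesis using yv[OF v] NF_Wd[OF v] by (simp add: lamW_def WN_def perm_append)
next
  case False
  have "\<not> (perm (yv n v) \<circ> perm v' = w0 n)"
  proof
    assume "perm (yv n v) \<circ> perm v' = w0 n"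
    then have "perm (yv n v) \<circ> perm v' = perm (yv n v) \<circ> perm v" using yv(2)[OF v] by simp
    then have "perm v' = perm v" by (rule perm_cancel_left)
    then show False using NF_inj[OF v' v] False by simp
  qed
  then show ?thesis using False by (simp add: lamW_def perm_append)
qed

definition cf :: "nat \<Rightarrow> nat list \<Rightarrow> (nat list \<Rightarrow> rat) \<Rightarrow> rat" where
  "cf n v t = LAM n (mon (yv n v) \<star> t)"

lemma cf_lincomb: "cf n v (\<lambda>w. \<Sum>i\<in>A. c i * g i w) = (\<Sum>i\<in>A. c i * cf n v (g i))"
  by (simp add: cf_def fmul_sum_right LAM_lincomb)

lemma cf_fadd: "cf n v (fadd f g) = cf n v f + cf n v g"
  by (simp add: cf_def fmul_fadd_right LAM_fadd)

lemma cf_mon: "v \<in> NF n \<Longrightarrow> v' \<in> NF n \<Longrightarrow> cf n v (mon v') = (if v' = v then 1 else 0)"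
  by (simp add: cf_def mon_mul_mon LAM_mon delta)

lemma cf_I: "v \<in> NF n \<Longrightarrow> x \<in> I n \<Longrightarrow> cf n v x = 0"
  using LAM_I[of x n "mon (yv n v)" "mon []"] yv(1)[of v n]
  by (simp add: cf_def mul_mon_Nil mon_FreeAlg)

definition Dm :: "nat \<Rightarrow> (nat list \<Rightarrow> rat) \<Rightarrow> (nat list \<Rightarrow> rat)" where
  "Dm n t = (\<lambda>w. t w - (\<Sum>v\<in>NF n. cf n v t * mon v w))"

lemma Dm_mon: assumes "set w \<subseteq> {1..<n}" shows "Dm n (mon w) \<in> I n"
proof -
  have "zr n w \<or> (\<exists>v\<in>NF n. cg n w v)" using SP_all[of n] assms by (simp add: SP_def)
  then show ?thesis
  proof
    assume z: "zr n w"
    then have "cf n v (mon w) = 0" if "v \<in> NF n" for v using cf_I that by (simp add: zr_def)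
    then have "Dm n (mon w) = mon w" by (simp add: Dm_def)
    then show ?thesis using z by (simp add: zr_def)
  next
    assume "\<exists>v\<in>NF n. cg n w v"
    then obtain v0 where v0: "v0 \<in> NF n" "cg n w v0" by blast
    have dec: "mon w = fadd (fsub (mon w) (mon v0)) (mon v0)"
      by (rule ext) (simp add: fsub_def fadd_def)
    have "cf n v (mon w) = (if v0 = v then 1 else 0)" if "v \<in> NF n" for v
    proof -
      have "cf n v (mon w) = cf n v (fsub (mon w) (mon v0)) + cf n v (mon v0)"
        by (subst dec) (rule cf_fadd)
      also have "cf n v (fsub (mon w) (mon v0)) = 0" using cf_I[OF that] v0 by (simp add: cg_def)
      finally show ?thesis using cf_mon[OF that v0(1)] by simp
    qed
    then have "Dm n (mon w) = (\<lambda>x. mon w x - (\<Sum>v\<in>NF n. if v = v0 then mon v x else 0))"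
      unfolding Dm_def by (intro ext arg_cong2[where f="(-)"] refl sum.cong) auto
    also have "\<dots> = fsub (mon w) (mon v0)" using finite_NF v0(1) by (simp add: fsub_def sum.delta')
    finally show ?thesis using v0 by (simp add: cg_def)
  qed
qed

lemma Dm_I: assumes t: "t \<in> FreeAlg n" shows "Dm n t \<in> I n"
proof -
  have cft: "cf n v t = (\<Sum>u\<in>supp t. t u * cf n v (mon u))" for v
    by (subst expand[OF t]) (rule cf_lincomb)
  have "Dm n t = (\<lambda>w. \<Sum>u\<in>supp t. t u * Dm n (mon u) w)"
  proof (rule ext)
    fix w
    have "(\<Sum>u\<in>supp t. t u * Dm n (mon u) w)
        = (\<Sum>u\<in>supp t. t u * mon u w) - (\<Sum>u\<in>supp t. \<Sum>v\<in>NF n. t u * cf n v (mon u) * mon v w)"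
      by (simp add: Dm_def right_diff_distrib sum_subtractf sum_distrib_left mult.assoc)
    also have "(\<Sum>u\<in>supp t. \<Sum>v\<in>NF n. t u * cf n v (mon u) * mon v w) = (\<Sum>v\<in>NF n. cf n v t * mon v w)"
      by (simp add: cft sum_distrib_right sum.swap[of _ "supp t"])
    also have "(\<Sum>u\<in>supp t. t u * mon u w) = t w"
      using fun_cong[OF expand[OF t], of w] by simp
    finally show "Dm n t w = (\<Sum>u\<in>supp t. t u * Dm n (mon u) w)" by (simp add: Dm_def)
  qed
  also have "\<dots> \<in> I n"
    by (intro I_lincomb Dm_mon) (simp_all add: FreeAlgD(1)[OF t] FreeAlgD(2)[OF t, simplified])
  finally show ?thesis .
qed

lemma Dual_lincomb:
  assumes phi: "\<phi> \<in> NilCoxDual n" and "finite A" "\<And>i. i \<in> A \<Longrightarrow> g i \<in> FreeAlg n"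
  shows "\<phi> (\<lambda>w. \<Sum>i\<in>A. c i * g i w) = (\<Sum>i\<in>A. c i * \<phi> (g i))"
  using assms(2,3)
proof (induction A rule: finite_induct)
  case empty
  have z: "(\<lambda>_::nat list. 0::rat) \<in> FreeAlg n" by (simp add: FreeAlg_def)
  have "fsmult 0 (\<lambda>_. 0) = (\<lambda>_::nat list. 0::rat)" by (simp add: fsmult_def)
  moreover have "\<forall>c. \<forall>x\<in>FreeAlg n. \<phi> (fsmult c x) = c * \<phi> x" using phi unfolding NilCoxDual_def by blast
  ultimately have "\<phi> (\<lambda>_. 0) = 0 * \<phi> (\<lambda>_. 0)" using z by metis
  then show ?case by simp
next
  case (insert a F)
  have eq: "(\<lambda>w. \<Sum>i\<in>insert a F. c i * g i w) = fadd (fsmult (c a) (g a)) (\<lambda>w. \<Sum>i\<in>F. c i * g i w)"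
    using insert by (simp add: fadd_def fsmult_def)
  have m1: "fsmult (c a) (g a) \<in> FreeAlg n" using insert by (simp add: FreeAlg_fsmult)
  have m2: "(\<lambda>w. \<Sum>i\<in>F. c i * g i w) \<in> FreeAlg n" using insert by (intro FreeAlg_lincomb) auto
  have "\<phi> (fadd (fsmult (c a) (g a)) (\<lambda>w. \<Sum>i\<in>F. c i * g i w)) = \<phi> (fsmult (c a) (g a)) + \<phi> (\<lambda>w. \<Sum>i\<in>F. c i * g i w)"
    using phi m1 m2 unfolding NilCoxDual_def by blast
  also have "\<phi> (fsmult (c a) (g a)) = c a * \<phi> (g a)" using phi insert unfolding NilCoxDual_def by blast
  finally show ?case using eq insert by simp
qed

lemma psiF_FreeAlg: assumes "b \<in> FreeAlg n" shows "psiF n b \<in> FreeAlg n"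
  by (subst psiF_expand[OF assms], intro FreeAlg_lincomb mon_FreeAlg psi_Wd)
    (simp_all add: FreeAlgD(1)[OF assms] FreeAlgD(2)[OF assms, simplified])

theorem mainTheorem3:
  fixes n :: nat
  shows "\<exists>\<Phi> :: (nat list \<Rightarrow> rat) \<Rightarrow> ((nat list \<Rightarrow> rat) \<Rightarrow> rat).
     (\<forall>t\<in>FreeAlg n. \<Phi> t \<in> NilCoxDual n)
   \<and> (\<forall>s\<in>FreeAlg n. \<forall>t\<in>FreeAlg n. \<forall>y\<in>FreeAlg n. \<Phi> (fadd s t) y = \<Phi> s y + \<Phi> t y)
   \<and> (\<forall>c. \<forall>t\<in>FreeAlg n. \<forall>y\<in>FreeAlg n. \<Phi> (fsmult c t) y = c * \<Phi> t y)
   \<and> (\<forall>t\<in>FreeAlg n. (\<forall>y\<in>FreeAlg n. \<Phi> t y = 0) \<longleftrightarrow> t \<in> NilCoxIdeal n)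
   \<and> (\<forall>\<phi>\<in>NilCoxDual n. \<exists>t\<in>FreeAlg n. \<forall>y\<in>FreeAlg n. \<phi> y = \<Phi> t y)
   \<and> (\<forall>a\<in>FreeAlg n. \<forall>b\<in>FreeAlg n. \<forall>t\<in>FreeAlg n. \<forall>y\<in>FreeAlg n.
        \<Phi> (a \<star> t \<star> psiF n b) y = \<Phi> t (b \<star> y \<star> a))"
proof (intro exI[of _ "\<lambda>t y. LAM n (y \<star> t)"] conjI ballI allI)
  fix t assume t: "t \<in> FreeAlg n"
  show "(\<lambda>y. LAM n (y \<star> t)) \<in> NilCoxDual n"
    unfolding NilCoxDual_def
  proof (intro CollectI conjI ballI allI)
    fix x y show "LAM n (fadd x y \<star> t) = LAM n (x \<star> t) + LAM n (y \<star> t)"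
      by (simp add: fmul_fadd_left LAM_fadd)
  next
    fix c x show "LAM n (fsmult c x \<star> t) = c * LAM n (x \<star> t)"
      by (simp add: fmul_fsmult_left LAM_fsmult)
  next
    fix x assume "x \<in> I n"
    then show "LAM n (x \<star> t) = 0"
      using LAM_I[of x n "mon []" t] t by (simp add: mon_Nil_mul mon_FreeAlg)
  qed
next
  fix s t y show "LAM n (y \<star> fadd s t) = LAM n (y \<star> s) + LAM n (y \<star> t)"
    by (simp add: fmul_fadd_right LAM_fadd)
next
  fix c t y show "LAM n (y \<star> fsmult c t) = c * LAM n (y \<star> t)"
    by (simp add: fmul_fsmult_right LAM_fsmult)
next
  fix t assume t: "t \<in> FreeAlg n"
  show "(\<forall>y\<in>FreeAlg n. LAM n (y \<star> t) = 0) \<longleftrightarrow> t \<in> NilCoxIdeal n"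
  proof
    assume h: "\<forall>y\<in>FreeAlg n. LAM n (y \<star> t) = 0"
    have "cf n v t = 0" if "v \<in> NF n" for v
      using h yv(1)[OF that] by (simp add: cf_def mon_FreeAlg)
    then have "Dm n t = t" by (simp add: Dm_def)
    then show "t \<in> NilCoxIdeal n" using Dm_I[OF t] by simp
  next
    assume "t \<in> NilCoxIdeal n"
    then show "\<forall>y\<in>FreeAlg n. LAM n (y \<star> t) = 0"
      using LAM_I[of t n _ "mon []"] by (simp add: mul_mon_Nil mon_FreeAlg)
  qed
next
  fix \<phi> assume phi: "\<phi> \<in> NilCoxDual n"
  define t where "t = (\<lambda>w. \<Sum>v\<in>NF n. \<phi> (mon v) * psiF n (mon (yv n v)) w)"
  have tF: "t \<in> FreeAlg n" unfolding t_def
    by (intro FreeAlg_lincomb psiF_FreeAlg mon_FreeAlg finite_NF yv(1))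
  show "\<exists>t\<in>FreeAlg n. \<forall>y\<in>FreeAlg n. \<phi> y = LAM n (y \<star> t)"
  proof (intro bexI[OF _ tF] ballI)
    fix y assume y: "y \<in> FreeAlg n"
    have "LAM n (y \<star> t) = (\<Sum>v\<in>NF n. \<phi> (mon v) * LAM n (y \<star> psiF n (mon (yv n v))))"
      by (simp add: t_def fmul_sum_right LAM_lincomb)
    also have "\<dots> = (\<Sum>v\<in>NF n. \<phi> (mon v) * cf n v y)"
      using y yv(1) by (intro sum.cong refl) (simp add: TT mon_FreeAlg cf_def)
    finally have L: "LAM n (y \<star> t) = (\<Sum>v\<in>NF n. cf n v y * \<phi> (mon v))" by (simp add: mult.commute)
    define S where "S = (\<lambda>w. \<Sum>v\<in>NF n. cf n v y * mon v w)"
    have SF: "S \<in> FreeAlg n" unfolding S_def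
      by (intro FreeAlg_lincomb mon_FreeAlg finite_NF NF_Wd)
    have DF: "Dm n y \<in> FreeAlg n"
    proof -
      have "Dm n y = fsub y S" by (rule ext) (simp add: Dm_def S_def fsub_def)
      then show ?thesis using y SF by (simp add: FreeAlg_fsub)
    qed
    have yeq: "y = fadd (Dm n y) S" by (rule ext) (simp add: Dm_def S_def fadd_def)
    have add: "\<forall>x\<in>FreeAlg n. \<forall>y\<in>FreeAlg n. \<phi> (fadd x y) = \<phi> x + \<phi> y"
      using phi unfolding NilCoxDual_def by blast
    have "\<phi> y = \<phi> (fadd (Dm n y) S)" using arg_cong[of _ _ \<phi>, OF yeq] .
    also have "\<dots> = \<phi> (Dm n y) + \<phi> S" using add DF SF by blast
    also have "\<phi> (Dm n y) = 0" using phi Dm_I[OF y] unfolding NilCoxDual_def by blast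
    also have "\<phi> S = (\<Sum>v\<in>NF n. cf n v y * \<phi> (mon v))"
      unfolding S_def using phi by (intro Dual_lincomb finite_NF mon_FreeAlg NF_Wd)
    finally show "\<phi> y = LAM n (y \<star> t)" using L by simp
  qed
next
  fix a b t y assume a: "a \<in> FreeAlg n" and b: "b \<in> FreeAlg n" and t: "t \<in> FreeAlg n" and y: "y \<in> FreeAlg n"
  have x: "y \<star> a \<star> t \<in> FreeAlg n" using a t y by (intro FreeAlg_fmul)
  have "LAM n (y \<star> (a \<star> t \<star> psiF n b)) = LAM n ((y \<star> a \<star> t) \<star> psiF n b)" by (simp add: fmul_assoc)
  also have "\<dots> = LAM n (b \<star> (y \<star> a \<star> t))" by (rule TT[OF x b])
  also have "\<dots> = LAM n ((b \<star> y \<star> a) \<star> t)" by (simp add: fmul_assoc)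
  finally show "LAM n (y \<star> (a \<star> t \<star> psiF n b)) = LAM n ((b \<star> y \<star> a) \<star> t)" .
qed

end
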